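(* Let $n\ge1$, let $b_1,\dots,b_n$ be integers with $1\le b_1\le b_2\le\cdots\le b_n$, let $s=\sum_{i=1}^n b_i$, and let $f:\mathbb R^n\to\mathbb R$, $f(\bm\theta)=\prod_{i=1}^n\theta_i^{b_i}$. Let $N$ be the minimum atom count of a DC decomposition of $f$ (defined in the context). Then: (a) if $s$ is even and the atoms are of the form $(u^\top\bm\theta)^s$, then $\prod_{i=2}^n(b_i+1)\le N\le\left\lfloor\tfrac12\prod_{i=1}^n(b_i+1)\right\rfloor$; (b) if $s$ is odd and the atoms are of the form $(u^\top\bm\theta+\kappa)^{s+1}$, then $N=\prod_{i=1}^n(b_i+1)$.
   Context: A DC decomposition of $f$ with atoms is an identity, valid for all $\bm\theta\in\mathbb R^n$, $f(\bm\theta)=g(\bm\theta)-h(\bm\theta)$ with $g(\bm\theta)=\sum_{i=1}^r\alpha_i\phi_i(\bm\theta)$ and $h(\bm\theta)=\sum_{i=r+1}^{r+q}\alpha_i\phi_i(\bm\theta)$, where every $\alpha_i>0$ and each $\phi_i$ is a convex atom: $\phi_i(\bm\theta)=(u_i^\top\bm\theta)^s$ with $u_i\in\mathbb R^n$ when $s$ is even, and $\phi_i(\bm\theta)=(u_i^\top\bm\theta+\kappa_i)^{s+1}$ with $u_i\in\mathbb R^n$, $\kappa_i\in\mathbb R$ when $s$ is odd. The minimum atom count $N$ is the minimum of $r+q$ over all such decompositions. *)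

theory Defs
  imports Complex_Main
begin

text \<open>Points of R^n are represented as functions nat => real; only the
coordinates 0..n-1 matter.  lin n u theta is u^T theta.\<close>

definition lin :: "nat \<Rightarrow> (nat \<Rightarrow> real) \<Rightarrow> (nat \<Rightarrow> real) \<Rightarrow> real" where
  "lin n u \<theta> = (\<Sum>i<n. u i * \<theta> i)"

definition is_DC_even :: "nat \<Rightarrow> nat \<Rightarrow> ((nat \<Rightarrow> real) \<Rightarrow> real)
    \<Rightarrow> (real \<times> (nat \<Rightarrow> real)) list \<Rightarrow> (real \<times> (nat \<Rightarrow> real)) list \<Rightarrow> bool" where
  "is_DC_even n s f g h \<longleftrightarrow>
     (\<forall>(a, u) \<in> set (g @ h). a > 0) \<and>
     (\<forall>\<theta>. f \<theta> = (\<Sum>(a, u)\<leftarrow>g. a * lin n u \<theta> ^ s) - (\<Sum>(a, u)\<leftarrow>h. a * lin n u \<theta> ^ s))"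

definition is_DC_odd :: "nat \<Rightarrow> nat \<Rightarrow> ((nat \<Rightarrow> real) \<Rightarrow> real)
    \<Rightarrow> (real \<times> (nat \<Rightarrow> real) \<times> real) list \<Rightarrow> (real \<times> (nat \<Rightarrow> real) \<times> real) list \<Rightarrow> bool" where
  "is_DC_odd n s f g h \<longleftrightarrow>
     (\<forall>(a, u, k) \<in> set (g @ h). a > 0) \<and>
     (\<forall>\<theta>. f \<theta> = (\<Sum>(a, u, k)\<leftarrow>g. a * (lin n u \<theta> + k) ^ (s + 1))
                 - (\<Sum>(a, u, k)\<leftarrow>h. a * (lin n u \<theta> + k) ^ (s + 1)))"

definition has_DC_even :: "nat \<Rightarrow> nat \<Rightarrow> ((nat \<Rightarrow> real) \<Rightarrow> real) \<Rightarrow> bool" where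
  "has_DC_even n s f \<longleftrightarrow> (\<exists>g h. is_DC_even n s f g h)"

definition has_DC_odd :: "nat \<Rightarrow> nat \<Rightarrow> ((nat \<Rightarrow> real) \<Rightarrow> real) \<Rightarrow> bool" where
  "has_DC_odd n s f \<longleftrightarrow> (\<exists>g h. is_DC_odd n s f g h)"

definition min_atoms_even :: "nat \<Rightarrow> nat \<Rightarrow> ((nat \<Rightarrow> real) \<Rightarrow> real) \<Rightarrow> nat" where
  "min_atoms_even n s f = (LEAST k. \<exists>g h. is_DC_even n s f g h \<and> length g + length h = k)"

definition min_atoms_odd :: "nat \<Rightarrow> nat \<Rightarrow> ((nat \<Rightarrow> real) \<Rightarrow> real) \<Rightarrow> nat" where
  "min_atoms_odd n s f = (LEAST k. \<exists>g h. is_DC_odd n s f g h \<and> length g + length h = k)"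

definition monomial :: "nat \<Rightarrow> (nat \<Rightarrow> nat) \<Rightarrow> (nat \<Rightarrow> real) \<Rightarrow> real" where
  "monomial n b \<theta> = (\<Prod>i<n. \<theta> i ^ b i)"

end

theory Submission
  imports Defs "HOL-Library.FuncSet"
begin

definition M1 :: "nat \<Rightarrow> real \<Rightarrow> nat \<Rightarrow> real" where
  "M1 b a j = (\<Sum>k\<le>b. (-1)^(b+k) * real (b choose k) * (real k + a)^j)"

lemma alt_shift:
  fixes \<phi> :: "nat \<Rightarrow> real"
  shows "(\<Sum>k\<le>Suc b. (-1)^(Suc b + k) * real (Suc b choose k) * \<phi> k)
     = (\<Sum>k\<le>b. (-1)^(b+k) * real (b choose k) * (\<phi> (Suc k) - \<phi> k))"
proof -
  have "(\<Sum>k\<le>Suc b. (-1)^(Suc b + k) * real (Suc b choose k) * \<phi> k)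
     = (-1)^(Suc b) * \<phi> 0 + (\<Sum>k\<le>b. (-1)^(b+k) * real (Suc b choose Suc k) * \<phi> (Suc k))"
    by (subst sum.atMost_Suc_shift) simp
  also have "(\<Sum>k\<le>b. (-1)^(b+k) * real (Suc b choose Suc k) * \<phi> (Suc k))
     = (\<Sum>k\<le>b. (-1)^(b+k) * real (b choose k) * \<phi> (Suc k))
       + (\<Sum>k\<le>b. (-1)^(b+k) * real (b choose Suc k) * \<phi> (Suc k))"
    by (simp add: sum.distrib[symmetric] algebra_simps)
  also have "(\<Sum>k\<le>b. (-1)^(b+k) * real (b choose Suc k) * \<phi> (Suc k))
      = (\<Sum>k\<le>Suc b. (-1)^(b+k+1) * real (b choose k) * \<phi> k) - (-1)^(b+1) * \<phi> 0"
    by (subst sum.atMost_Suc_shift) simp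
  also have "(\<Sum>k\<le>Suc b. (-1)^(b+k+1) * real (b choose k) * \<phi> k)
      = (\<Sum>k\<le>b. (-1)^(b+k+1) * real (b choose k) * \<phi> k)"
    by simp
  also have "(\<Sum>k\<le>b. (-1)^(b+k+1) * real (b choose k) * \<phi> k)
      = - (\<Sum>k\<le>b. (-1)^(b+k) * real (b choose k) * \<phi> k)"
    unfolding sum_negf[symmetric] by (rule sum.cong) auto
  finally have eq: "(\<Sum>k\<le>Suc b. (-1)^(Suc b + k) * real (Suc b choose k) * \<phi> k)
     = (-1)^(Suc b) * \<phi> 0 + ((\<Sum>k\<le>b. (-1)^(b+k) * real (b choose k) * \<phi> (Suc k))
        + (- (\<Sum>k\<le>b. (-1)^(b+k) * real (b choose k) * \<phi> k) - (-1)^(b+1) * \<phi> 0))" .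
  have "(\<Sum>k\<le>b. (-1)^(b+k) * real (b choose k) * (\<phi> (Suc k) - \<phi> k))
     = (\<Sum>k\<le>b. (-1)^(b+k) * real (b choose k) * \<phi> (Suc k)) - (\<Sum>k\<le>b. (-1)^(b+k) * real (b choose k) * \<phi> k)"
    by (simp only: right_diff_distrib sum_subtractf)
  moreover have "(-1::real)^(Suc b) * \<phi> 0 - (-1)^(b+1) * \<phi> 0 = 0" by simp
  ultimately show ?thesis using eq by linarith
qed

lemma M1_Suc: "M1 (Suc b) a j = (\<Sum>i<j. real (j choose i) * M1 b a i)"
proof -
  have "M1 (Suc b) a j = (\<Sum>k\<le>b. (-1)^(b+k) * real (b choose k) * ((real (Suc k) + a)^j - (real k + a)^j))"
    unfolding M1_def by (rule alt_shift)
  also have "\<dots> = (\<Sum>k\<le>b. (-1)^(b+k) * real (b choose k) * (\<Sum>i<j. real (j choose i) * (real k + a)^i))"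
  proof (rule sum.cong[OF refl])
    fix k
    have "(real (Suc k) + a)^j = ((real k + a) + 1)^j" by (simp add: algebra_simps)
    also have "\<dots> = (\<Sum>i\<le>j. real (j choose i) * (real k + a)^i)"
      by (subst binomial_ring) (simp add: mult.commute)
    also have "\<dots> = (\<Sum>i<j. real (j choose i) * (real k + a)^i) + (real k + a)^j"
      by (simp add: lessThan_Suc_atMost[symmetric])
    finally show "(-1)^(b+k) * real (b choose k) * ((real (Suc k) + a)^j - (real k + a)^j) =
       (-1)^(b+k) * real (b choose k) * (\<Sum>i<j. real (j choose i) * (real k + a)^i)" by simp
  qed
  also have "\<dots> = (\<Sum>i<j. real (j choose i) * M1 b a i)"
    unfolding M1_def by (simp add: sum_distrib_left sum_distrib_right mult_ac sum.swap[of _ "{..<j}"])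
  finally show ?thesis .
qed

lemma M1_low: "j \<le> b \<Longrightarrow> M1 b a j = (if j = b then fact b else 0)"
proof (induction b arbitrary: j)
  case 0 thus ?case by (simp add: M1_def)
next
  case (Suc b)
  have "M1 (Suc b) a j = (\<Sum>i<j. real (j choose i) * M1 b a i)" by (rule M1_Suc)
  also have "\<dots> = (\<Sum>i<j. real (j choose i) * (if i = b then fact b else 0))"
    using Suc by (intro sum.cong) auto
  also have "\<dots> = (if j = Suc b then fact (Suc b) else 0)"
  proof (cases "j = Suc b")
    case True
    then show ?thesis by (simp add: sum.delta' lessThan_Suc)
  next
    case False
    with Suc.prems have "b \<notin> {..<j}" by auto
    then show ?thesis using False by (simp add: sum.delta' )
  qed
  finally show ?case .
qed

lemma M1_top: "M1 b a (Suc b) = fact (Suc b) * (a + real b / 2)"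
proof (induction b arbitrary: a)
  case 0 thus ?case by (simp add: M1_def)
next
  case (Suc b)
  have "M1 (Suc b) a (Suc (Suc b)) = (\<Sum>i<Suc (Suc b). real (Suc (Suc b) choose i) * M1 b a i)"
    by (rule M1_Suc)
  also have "\<dots> = (\<Sum>i<b. real (Suc (Suc b) choose i) * M1 b a i)
       + real (Suc (Suc b) choose b) * M1 b a b + real (Suc (Suc b) choose Suc b) * M1 b a (Suc b)"
    by (simp only: sum.lessThan_Suc)
  also have "(\<Sum>i<b. real (Suc (Suc b) choose i) * M1 b a i) = 0"
    by (intro sum.neutral ballI) (simp add: M1_low)
  also have "M1 b a b = fact b" by (simp add: M1_low)
  also have "M1 b a (Suc b) = fact (Suc b) * (a + real b / 2)" by (rule Suc.IH)
  also have "real (Suc (Suc b) choose Suc b) = real (Suc (Suc b))" by (simp only: binomial_Suc_n)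
  also have "real (Suc (Suc b) choose b) = real (Suc (Suc b)) * real (Suc b) / 2"
  proof -
    have 1: "Suc (Suc b) choose b = Suc (Suc b) choose 2"
      using binomial_symmetric[of b "Suc (Suc b)"] by simp
    have 2: "Suc (Suc b) * (Suc b choose 1) = (Suc (Suc b) choose Suc 1) * Suc 1"
      by (rule Suc_times_binomial_eq)
    have "(Suc (Suc b) choose b) * 2 = Suc (Suc b) * Suc b"
      using 1 2 by (simp add: numeral_2_eq_2)
    then have "real (Suc (Suc b) choose b) * 2 = real (Suc (Suc b)) * real (Suc b)"
      by (metis of_nat_mult of_nat_numeral)
    thus ?thesis by simp
  qed
  finally show ?case by (simp add: field_simps)
qed

definition wt :: "nat \<Rightarrow> nat \<Rightarrow> real" where
  "wt b k = (-1)^(b+k) * real (b choose k)"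
definition pt :: "nat \<Rightarrow> nat \<Rightarrow> real" where
  "pt b k = real k - real b / 2"

lemma mom_eq: "(\<Sum>k\<le>b. wt b k * pt b k ^ j) = M1 b (- real b / 2) j"
  unfolding M1_def wt_def pt_def by simp

lemma mom_low: "j < b \<Longrightarrow> (\<Sum>k\<le>b. wt b k * pt b k ^ j) = 0"
  by (simp add: mom_eq M1_low)
lemma mom_mid: "(\<Sum>k\<le>b. wt b k * pt b k ^ b) = fact b"
  by (simp add: mom_eq M1_low)
lemma mom_top: "(\<Sum>k\<le>b. wt b k * pt b k ^ Suc b) = 0"
  by (simp only: mom_eq M1_top) simp

definition ext :: "nat \<Rightarrow> nat \<Rightarrow> nat \<Rightarrow> real \<times> (nat \<Rightarrow> real) \<Rightarrow> real \<times> (nat \<Rightarrow> real)" where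
  "ext bn n k wu = (fst wu * wt bn k, (snd wu)(n := pt bn k))"

fun fulllist :: "(nat \<Rightarrow> nat) \<Rightarrow> nat \<Rightarrow> (real \<times> (nat \<Rightarrow> real)) list" where
  "fulllist b 0 = [(1, \<lambda>_. 0)]"
| "fulllist b (Suc n) = concat (map (\<lambda>k. map (ext (b n) n k) (fulllist b n)) [0..<Suc (b n)])"

lemma lin_Suc_upd: "lin (Suc n) (u(n := p)) \<theta> = lin n u \<theta> + p * \<theta> n"
  unfolding lin_def by (simp add: sum.lessThan_Suc)

lemma sum_list_concat_map:
  "(\<Sum>x\<leftarrow>concat (map f xs). g x) = (\<Sum>y\<leftarrow>xs. \<Sum>x\<leftarrow>f y. g x)"
  by (induction xs) auto

lemma sum_list_upt_atMost: fixes f :: "nat \<Rightarrow> real" shows "(\<Sum>k\<leftarrow>[0..<Suc m]. f k) = (\<Sum>k\<le>m. f k)"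
proof (induction m)
  case (Suc m) thus ?case by (simp add: atMost_Suc)
qed simp

lemma fulllist_Suc_sum:
  "(\<Sum>(w,u)\<leftarrow>fulllist b (Suc n). w * \<phi> (lin (Suc n) u \<theta>))
   = (\<Sum>k\<le>b n. wt (b n) k * (\<Sum>(w,u)\<leftarrow>fulllist b n. w * \<phi> (lin n u \<theta> + pt (b n) k * \<theta> n)))"
proof -
  have "(\<Sum>(w,u)\<leftarrow>fulllist b (Suc n). w * \<phi> (lin (Suc n) u \<theta>))
     = (\<Sum>k\<leftarrow>[0..<Suc (b n)]. \<Sum>wu\<leftarrow>map (ext (b n) n k) (fulllist b n). (case wu of (w,u) \<Rightarrow> w * \<phi> (lin (Suc n) u \<theta>)))"
    by (simp add: sum_list_concat_map)
  also have "\<dots> = (\<Sum>k\<leftarrow>[0..<Suc (b n)]. wt (b n) k * (\<Sum>(w,u)\<leftarrow>fulllist b n. w * \<phi> (lin n u \<theta> + pt (b n) k * \<theta> n)))"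
    by (simp add: ext_def lin_Suc_upd case_prod_beta sum_list_const_mult[symmetric] o_def mult_ac)
  also have "\<dots> = (\<Sum>k\<le>b n. wt (b n) k * (\<Sum>(w,u)\<leftarrow>fulllist b n. w * \<phi> (lin n u \<theta> + pt (b n) k * \<theta> n)))"
    by (rule sum_list_upt_atMost)
  finally show ?thesis .
qed

definition Bs :: "(nat \<Rightarrow> nat) \<Rightarrow> nat \<Rightarrow> nat" where "Bs b n = (\<Sum>i<n. b i)"

lemma monomial_Suc: "monomial (Suc n) b \<theta> = monomial n b \<theta> * \<theta> n ^ b n"
  unfolding monomial_def by simp

lemma binom_fact_eq: "k \<le> e \<Longrightarrow> real (e choose k) * fact k * fact (e - k) = fact e"
  by (simp add: binomial_fact)

lemma full_G:
  "e \<le> Bs b n + 1 \<Longrightarrow> (\<Sum>(w,u)\<leftarrow>fulllist b n. w * (lin n u \<theta> + c)^e) =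
     (if e < Bs b n then 0 else if e = Bs b n then fact e * monomial n b \<theta>
      else fact e * c * monomial n b \<theta>)"
proof (induction n arbitrary: e c)
  case 0
  then show ?case by (auto simp: Bs_def lin_def monomial_def le_Suc_eq)
next
  case (Suc n)
  define G where "G = (\<lambda>e. (\<Sum>(w,u)\<leftarrow>fulllist b n. w * (lin n u \<theta> + c)^e))"
  define y where "y = \<theta> n"
  define bn where "bn = b n"
  define mom where "mom = (\<lambda>j. \<Sum>k\<le>bn. wt bn k * pt bn k ^ j)"
  have BS: "Bs b (Suc n) = Bs b n + bn" by (simp add: Bs_def bn_def)
  have IH: "\<And>e'. e' \<le> Bs b n + 1 \<Longrightarrow> G e' = (if e' < Bs b n then 0 else if e' = Bs b n then fact e' * monomial n b \<theta>
      else fact e' * c * monomial n b \<theta>)"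
    unfolding G_def by (rule Suc.IH)
  have "(\<Sum>(w,u)\<leftarrow>fulllist b (Suc n). w * (lin (Suc n) u \<theta> + c)^e)
      = (\<Sum>k\<le>bn. wt bn k * (\<Sum>(w,u)\<leftarrow>fulllist b n. w * (lin n u \<theta> + pt bn k * y + c)^e))"
    unfolding bn_def y_def by (rule fulllist_Suc_sum)
  also have "\<dots> = (\<Sum>k\<le>bn. wt bn k * (\<Sum>j\<le>e. real (e choose j) * (pt bn k * y)^j * G (e - j)))"
  proof (rule sum.cong[OF refl])
    fix k
    have "(\<Sum>(w,u)\<leftarrow>fulllist b n. w * (lin n u \<theta> + pt bn k * y + c)^e)
        = (\<Sum>(w,u)\<leftarrow>fulllist b n. (\<Sum>j\<le>e. real (e choose j) * (pt bn k * y)^j * (w * (lin n u \<theta> + c)^(e - j))))"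
    proof (rule arg_cong[where f=sum_list], rule map_cong[OF refl])
      fix wu assume "wu \<in> set (fulllist b n)"
      obtain w u where wu: "wu = (w,u)" by fastforce
      have "(lin n u \<theta> + pt bn k * y + c)^e = ((pt bn k * y) + (lin n u \<theta> + c))^e" by (simp add: algebra_simps)
      also have "\<dots> = (\<Sum>j\<le>e. real (e choose j) * (pt bn k * y)^j * (lin n u \<theta> + c)^(e - j))"
        by (rule binomial_ring)
      finally show "(case wu of (w,u) \<Rightarrow> w * (lin n u \<theta> + pt bn k * y + c)^e) =
          (case wu of (w,u) \<Rightarrow> (\<Sum>j\<le>e. real (e choose j) * (pt bn k * y)^j * (w * (lin n u \<theta> + c)^(e - j))))"
        by (simp add: wu sum_distrib_left mult_ac)
    qed
    also have "\<dots> = (\<Sum>j\<le>e. real (e choose j) * (pt bn k * y)^j * G (e - j))"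
      unfolding G_def by (simp add: sum_list_sum_nth case_prod_beta sum.swap[of _ "{..e}"] sum_distrib_left)
    finally show "wt bn k * (\<Sum>(w,u)\<leftarrow>fulllist b n. w * (lin n u \<theta> + pt bn k * y + c)^e)
        = wt bn k * (\<Sum>j\<le>e. real (e choose j) * (pt bn k * y)^j * G (e - j))" by simp
  qed
  also have "\<dots> = (\<Sum>j\<le>e. real (e choose j) * y^j * G (e - j) * mom j)"
    unfolding mom_def
    by (simp add: sum_distrib_left sum_distrib_right sum.swap[of _ "{..e}"] power_mult_distrib mult_ac)
  also have "\<dots> = (\<Sum>j\<le>e. if j = bn then real (e choose j) * y^j * G (e - j) * fact bn else 0)"
  proof (rule sum.cong[OF refl])
    fix j assume j: "j \<in> {..e}"
    consider "j < bn" | "j = bn" | "j = Suc bn" | "j \<ge> Suc (Suc bn)" by linarith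
    then show "real (e choose j) * y^j * G (e - j) * mom j = (if j = bn then real (e choose j) * y^j * G (e - j) * fact bn else 0)"
    proof cases
      case 1 then show ?thesis by (simp add: mom_def mom_low)
    next
      case 2 then show ?thesis by (simp add: mom_def mom_mid)
    next
      case 3
      have "mom (Suc bn) = 0" unfolding mom_def by (rule mom_top)
      then show ?thesis using 3 by simp
    next
      case 4
      have "G (e - j) = 0" using IH[of "e - j"] Suc.prems BS 4 j by auto
      then show ?thesis using 4 by simp
    qed
  qed
  also have "\<dots> = (if bn \<le> e then real (e choose bn) * y^bn * G (e - bn) * fact bn else 0)"
    by (simp add: sum.delta')
  finally have main: "(\<Sum>(w,u)\<leftarrow>fulllist b (Suc n). w * (lin (Suc n) u \<theta> + c)^e)
     = (if bn \<le> e then real (e choose bn) * y^bn * G (e - bn) * fact bn else 0)" .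
  have mono: "monomial (Suc n) b \<theta> = monomial n b \<theta> * y ^ bn"
    by (simp add: monomial_Suc y_def bn_def)
  show ?case
  proof (cases "e < Bs b (Suc n)")
    case True
    then show ?thesis using main IH[of "e - bn"] BS by auto
  next
    case False
    then have ebn: "bn \<le> e" using BS by simp
    have fe: "real (e choose bn) * fact bn * fact (e - bn) = fact e" using binom_fact_eq[OF ebn] .
    show ?thesis
    proof (cases "e = Bs b (Suc n)")
      case True
      then have "G (e - bn) = fact (e - bn) * monomial n b \<theta>" using IH[of "e - bn"] BS by simp
      then show ?thesis using main ebn True fe mono
        by (simp add: mult_ac)
    next
      case False2: False
      then have "e = Bs b n + bn + 1" using False Suc.prems BS by simp
      then have "G (e - bn) = fact (e - bn) * c * monomial n b \<theta>" using IH[of "e - bn"] by simp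
      then show ?thesis using main ebn False False2 fe mono
        by (simp add: mult_ac)
    qed
  qed
qed

lemma wt_rev: "k \<le> b \<Longrightarrow> wt b (b - k) = (-1)^b * wt b k"
proof -
  assume k: "k \<le> b"
  have "(-1::real)^(b + (b - k)) = (-1)^b * (-1)^(b+k)"
  proof -
    have "b + (b - k) + 2 * k = b + (b + k)" using k by simp
    hence "(-1::real)^(b + (b - k)) * (-1)^(2*k) = (-1)^b * (-1)^(b+k)"
      by (metis power_add)
    thus ?thesis by (simp add: power_mult)
  qed
  thus ?thesis unfolding wt_def using binomial_symmetric[OF k] by simp
qed

lemma pt_rev: "k \<le> b \<Longrightarrow> pt b (b - k) = - pt b k"
  unfolding pt_def by (simp add: of_nat_diff)

lemma sum_atMost_rev: fixes f :: "nat \<Rightarrow> real" shows "(\<Sum>k\<le>m. f k) = (\<Sum>k\<le>m. f (m - k))"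
  using sum.nat_diff_reindex[of f "Suc m"] by (simp add: lessThan_Suc_atMost)

lemma full_sym:
  "(\<Sum>(w,u)\<leftarrow>fulllist b n. w * \<phi> (lin n u \<theta>)) = (-1)^(Bs b n) * (\<Sum>(w,u)\<leftarrow>fulllist b n. w * \<phi> (- lin n u \<theta>))"
proof (induction n arbitrary: \<phi>)
  case 0
  then show ?case by (simp add: Bs_def lin_def)
next
  case (Suc n)
  define bn where "bn = b n"
  define y where "y = \<theta> n"
  have "(\<Sum>(w,u)\<leftarrow>fulllist b (Suc n). w * \<phi> (lin (Suc n) u \<theta>))
     = (\<Sum>k\<le>bn. wt bn k * (\<Sum>(w,u)\<leftarrow>fulllist b n. w * \<phi> (lin n u \<theta> + pt bn k * y)))"
    unfolding bn_def y_def by (rule fulllist_Suc_sum)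
  also have "\<dots> = (\<Sum>k\<le>bn. wt bn k * ((-1)^(Bs b n) * (\<Sum>(w,u)\<leftarrow>fulllist b n. w * \<phi> (- lin n u \<theta> + pt bn k * y))))"
    using Suc.IH[of "\<lambda>x. \<phi> (x + pt bn k * y)" for k] by simp
  finally have L: "(\<Sum>(w,u)\<leftarrow>fulllist b (Suc n). w * \<phi> (lin (Suc n) u \<theta>))
     = (\<Sum>k\<le>bn. wt bn k * ((-1)^(Bs b n) * (\<Sum>(w,u)\<leftarrow>fulllist b n. w * \<phi> (- lin n u \<theta> + pt bn k * y))))" .
  have "(\<Sum>(w,u)\<leftarrow>fulllist b (Suc n). w * (\<lambda>x. \<phi> (- x)) (lin (Suc n) u \<theta>))
     = (\<Sum>k\<le>bn. wt bn k * (\<Sum>(w,u)\<leftarrow>fulllist b n. w * (\<lambda>x. \<phi> (- x)) (lin n u \<theta> + pt bn k * y)))"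
    unfolding bn_def y_def by (rule fulllist_Suc_sum)
  also have "\<dots> = (\<Sum>k\<le>bn. wt bn (bn - k) * (\<Sum>(w,u)\<leftarrow>fulllist b n. w * \<phi> (- lin n u \<theta> - pt bn (bn - k) * y)))"
    by (subst sum_atMost_rev) simp
  also have "\<dots> = (\<Sum>k\<le>bn. (-1)^bn * (wt bn k * (\<Sum>(w,u)\<leftarrow>fulllist b n. w * \<phi> (- lin n u \<theta> + pt bn k * y))))"
    by (rule sum.cong[OF refl]) (simp add: wt_rev pt_rev)
  finally have R: "(\<Sum>(w,u)\<leftarrow>fulllist b (Suc n). w * \<phi> (- lin (Suc n) u \<theta>))
     = (-1)^bn * (\<Sum>k\<le>bn. wt bn k * (\<Sum>(w,u)\<leftarrow>fulllist b n. w * \<phi> (- lin n u \<theta> + pt bn k * y)))"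
    by (simp add: sum_distrib_left)
  have BS: "Bs b (Suc n) = Bs b n + bn" by (simp add: Bs_def bn_def)
  have sgn: "(-1::real)^(Bs b (Suc n)) * (-1)^bn = (-1)^(Bs b n)"
    unfolding BS power_add by (simp add: mult.assoc power_mult_distrib[symmetric])
  define S where "S = (\<Sum>k\<le>bn. wt bn k * (\<Sum>(w,u)\<leftarrow>fulllist b n. w * \<phi> (- lin n u \<theta> + pt bn k * y)))"
  have L': "(\<Sum>(w,u)\<leftarrow>fulllist b (Suc n). w * \<phi> (lin (Suc n) u \<theta>)) = (-1)^(Bs b n) * S"
    unfolding L S_def by (simp add: sum_distrib_left mult_ac)
  have "(-1)^(Bs b n) * S = (-1)^(Bs b (Suc n)) * ((-1)^bn * S)"
    unfolding sgn[symmetric] by (simp only: mult.assoc)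
  then show ?case using L' R unfolding S_def by simp
qed

lemma pair_sum:
  fixes T :: "nat \<Rightarrow> real"
  assumes sym: "\<And>k. k \<le> m \<Longrightarrow> T (m - k) = T k"
  shows "(\<Sum>k\<le>m. T k) = 2 * (\<Sum>k<Suc m div 2. T k) + (if even m then T (m div 2) else 0)"
proof -
  define h where "h = Suc m div 2"
  have hm: "h \<le> m + 1" "2 * h \<le> m + 1" unfolding h_def by auto
  have split1: "{..m} = {..<h} \<union> {h..m}" using hm by auto
  have "(\<Sum>k\<le>m. T k) = (\<Sum>k<h. T k) + (\<Sum>k\<in>{h..m}. T k)"
    unfolding split1 by (rule sum.union_disjoint) auto
  moreover have "(\<Sum>k\<in>{h..m}. T k) = (if even m then T (m div 2) else 0) + (\<Sum>k\<in>{Suc m - h..m}. T k)"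
  proof (cases "even m")
    case True
    then have "h = m div 2" "Suc m - h = Suc h" unfolding h_def by auto
    moreover have "{h..m} = insert h {Suc h..m}" using \<open>h = m div 2\<close> by auto
    ultimately show ?thesis using True by simp
  next
    case False
    then have "Suc m - h = h" unfolding h_def by presburger
    then show ?thesis using False by simp
  qed
  moreover have "(\<Sum>k\<in>{Suc m - h..m}. T k) = (\<Sum>k<h. T (m - k))"
    by (rule sum.reindex_bij_witness[where i = "\<lambda>k. m - k" and j = "\<lambda>k. m - k"]) (use hm in auto)
  moreover have "(\<Sum>k<h. T (m - k)) = (\<Sum>k<h. T k)"
    by (rule sum.cong) (use hm sym in auto)
  ultimately show ?thesis unfolding h_def by simp
qed

fun halflist :: "(nat \<Rightarrow> nat) \<Rightarrow> nat \<Rightarrow> (real \<times> (nat \<Rightarrow> real)) list" where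
  "halflist b 0 = []"
| "halflist b (Suc n) = concat (map (\<lambda>k. map (ext (b n) n k) (fulllist b n)) [0..<Suc (b n) div 2])
      @ (if even (b n) then map (ext (b n) n (b n div 2)) (halflist b n) else [])"

lemma sum_list_upt0: "(\<Sum>k\<leftarrow>[0..<m]. f k) = (\<Sum>k<m. (f k :: real))"
  by (simp add: interv_sum_list_conv_sum_set_nat atLeast0LessThan)

lemma halflist_Suc_sum:
  "(\<Sum>(w,u)\<leftarrow>halflist b (Suc n). w * \<phi> (lin (Suc n) u \<theta>))
   = (\<Sum>k<Suc (b n) div 2. wt (b n) k * (\<Sum>(w,u)\<leftarrow>fulllist b n. w * \<phi> (lin n u \<theta> + pt (b n) k * \<theta> n)))
     + (if even (b n) then wt (b n) (b n div 2) * (\<Sum>(w,u)\<leftarrow>halflist b n. w * \<phi> (lin n u \<theta> + pt (b n) (b n div 2) * \<theta> n)) else 0)"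
proof -
  have "(\<Sum>(w,u)\<leftarrow>concat (map (\<lambda>k. map (ext (b n) n k) (fulllist b n)) [0..<Suc (b n) div 2]). w * \<phi> (lin (Suc n) u \<theta>))
     = (\<Sum>k\<leftarrow>[0..<Suc (b n) div 2]. \<Sum>wu\<leftarrow>map (ext (b n) n k) (fulllist b n). (case wu of (w,u) \<Rightarrow> w * \<phi> (lin (Suc n) u \<theta>)))"
    by (simp add: sum_list_concat_map)
  also have "\<dots> = (\<Sum>k\<leftarrow>[0..<Suc (b n) div 2]. wt (b n) k * (\<Sum>(w,u)\<leftarrow>fulllist b n. w * \<phi> (lin n u \<theta> + pt (b n) k * \<theta> n)))"
    by (simp add: ext_def lin_Suc_upd case_prod_beta sum_list_const_mult[symmetric] o_def mult_ac)
  also have "\<dots> = (\<Sum>k<Suc (b n) div 2. wt (b n) k * (\<Sum>(w,u)\<leftarrow>fulllist b n. w * \<phi> (lin n u \<theta> + pt (b n) k * \<theta> n)))"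
    by (rule sum_list_upt0)
  finally have A: "(\<Sum>(w,u)\<leftarrow>concat (map (\<lambda>k. map (ext (b n) n k) (fulllist b n)) [0..<Suc (b n) div 2]). w * \<phi> (lin (Suc n) u \<theta>)) = (\<Sum>k<Suc (b n) div 2. wt (b n) k * (\<Sum>(w,u)\<leftarrow>fulllist b n. w * \<phi> (lin n u \<theta> + pt (b n) k * \<theta> n)))" .
  have B: "(\<Sum>(w,u)\<leftarrow>map (ext (b n) n k) L. w * \<phi> (lin (Suc n) u \<theta>))
      = wt (b n) k * (\<Sum>(w,u)\<leftarrow>L. w * \<phi> (lin n u \<theta> + pt (b n) k * \<theta> n))" for k L
    by (simp add: ext_def lin_Suc_upd case_prod_beta sum_list_const_mult[symmetric] o_def mult_ac)
  show ?thesis using A B by simp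
qed

lemma half_val:
  "0 < e \<Longrightarrow> even (e + Bs b n) \<Longrightarrow>
   2 * (\<Sum>(w,u)\<leftarrow>halflist b n. w * (lin n u \<theta>)^e) = (\<Sum>(w,u)\<leftarrow>fulllist b n. w * (lin n u \<theta>)^e)"
proof (induction n)
  case 0
  then show ?case by (simp add: lin_def)
next
  case (Suc n)
  define bn where "bn = b n"
  define y where "y = \<theta> n"
  define T where "T = (\<lambda>k. wt bn k * (\<Sum>(w,u)\<leftarrow>fulllist b n. w * (lin n u \<theta> + pt bn k * y)^e))"
  have BS: "Bs b (Suc n) = Bs b n + bn" by (simp add: Bs_def bn_def)
  have full: "(\<Sum>(w,u)\<leftarrow>fulllist b (Suc n). w * (lin (Suc n) u \<theta>)^e) = (\<Sum>k\<le>bn. T k)"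
    unfolding T_def bn_def y_def by (rule fulllist_Suc_sum)
  have sym: "T (bn - k) = T k" if k: "k \<le> bn" for k
  proof -
    have "(\<Sum>(w,u)\<leftarrow>fulllist b n. w * (lin n u \<theta> + pt bn (bn - k) * y)^e)
        = (\<Sum>(w,u)\<leftarrow>fulllist b n. w * (\<lambda>x. (x - pt bn k * y)^e) (lin n u \<theta>))"
      using k by (simp add: pt_rev)
    also have "\<dots> = (-1)^(Bs b n) * (\<Sum>(w,u)\<leftarrow>fulllist b n. w * (\<lambda>x. (x - pt bn k * y)^e) (- lin n u \<theta>))"
      by (rule full_sym)
    also have "(\<Sum>(w,u)\<leftarrow>fulllist b n. w * (\<lambda>x. (x - pt bn k * y)^e) (- lin n u \<theta>))
       = (-1)^e * (\<Sum>(w,u)\<leftarrow>fulllist b n. w * (lin n u \<theta> + pt bn k * y)^e)"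
    proof -
      have pw: "(- a - c)^e = (-1)^e * (a + c)^e" for a c :: real
      proof -
        have "- a - c = (-1) * (a + c)" by simp
        then show ?thesis by (simp only: power_mult_distrib)
      qed
      have "(\<Sum>(w,u)\<leftarrow>fulllist b n. w * (\<lambda>x. (x - pt bn k * y)^e) (- lin n u \<theta>))
         = (\<Sum>wu\<leftarrow>fulllist b n. (-1)^e * (case wu of (w,u) \<Rightarrow> w * (lin n u \<theta> + pt bn k * y)^e))"
        by (rule arg_cong[where f=sum_list], rule map_cong[OF refl]) (auto split: prod.split simp: pw)
      also have "\<dots> = (-1)^e * (\<Sum>(w,u)\<leftarrow>fulllist b n. w * (lin n u \<theta> + pt bn k * y)^e)"
        by (rule sum_list_const_mult)
      finally show ?thesis .
    qed
    finally have "(\<Sum>(w,u)\<leftarrow>fulllist b n. w * (lin n u \<theta> + pt bn (bn - k) * y)^e)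
        = (-1)^(Bs b n) * (-1)^e * (\<Sum>(w,u)\<leftarrow>fulllist b n. w * (lin n u \<theta> + pt bn k * y)^e)" by simp
    moreover have "(-1::real)^bn * ((-1)^(Bs b n) * (-1)^e) = 1"
    proof -
      have "even (bn + Bs b n + e)" using Suc.prems(2) BS by (simp add: add_ac)
      then have "(-1::real)^(bn + Bs b n + e) = 1" by simp
      thus ?thesis by (simp add: power_add mult_ac)
    qed
    ultimately have "T (bn - k) = ((-1::real)^bn * ((-1)^(Bs b n) * (-1)^e)) * T k"
      unfolding T_def using wt_rev[OF k] by (simp add: mult_ac)
    moreover note \<open>(-1::real)^bn * ((-1)^(Bs b n) * (-1)^e) = 1\<close>
    ultimately show ?thesis by simp
  qed
  have half: "(\<Sum>(w,u)\<leftarrow>halflist b (Suc n). w * (lin (Suc n) u \<theta>)^e)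
      = (\<Sum>k<Suc bn div 2. T k) + (if even bn then wt bn (bn div 2) * (\<Sum>(w,u)\<leftarrow>halflist b n. w * (lin n u \<theta>)^e) else 0)"
  proof -
    have "(\<Sum>(w,u)\<leftarrow>halflist b (Suc n). w * (\<lambda>x. x^e) (lin (Suc n) u \<theta>))
      = (\<Sum>k<Suc bn div 2. T k) + (if even bn then wt bn (bn div 2) * (\<Sum>(w,u)\<leftarrow>halflist b n. w * (\<lambda>x. x^e) (lin n u \<theta> + pt bn (bn div 2) * y)) else 0)"
      unfolding T_def bn_def y_def by (rule halflist_Suc_sum)
    moreover have "even bn \<Longrightarrow> pt bn (bn div 2) = 0" unfolding pt_def by (auto simp: real_of_nat_div)
    ultimately show ?thesis by auto
  qed
  show ?case
  proof (cases "even bn")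
    case True
    then have "even (e + Bs b n)" using Suc.prems(2) BS by simp
    then have IH: "2 * (\<Sum>(w,u)\<leftarrow>halflist b n. w * (lin n u \<theta>)^e) = (\<Sum>(w,u)\<leftarrow>fulllist b n. w * (lin n u \<theta>)^e)"
      using Suc.IH Suc.prems(1) by blast
    have "T (bn div 2) = wt bn (bn div 2) * (\<Sum>(w,u)\<leftarrow>fulllist b n. w * (lin n u \<theta>)^e)"
      unfolding T_def using True by (simp add: pt_def real_of_nat_div)
    have "(\<Sum>k\<le>bn. T k) = 2 * (\<Sum>k<Suc bn div 2. T k) + T (bn div 2)"
      using pair_sum[of bn T] sym True by simp
    moreover have "2 * ((\<Sum>k<Suc bn div 2. T k) + wt bn (bn div 2) * (\<Sum>(w,u)\<leftarrow>halflist b n. w * (lin n u \<theta>)^e))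
       = 2 * (\<Sum>k<Suc bn div 2. T k) + wt bn (bn div 2) * (2 * (\<Sum>(w,u)\<leftarrow>halflist b n. w * (lin n u \<theta>)^e))"
      by (simp add: algebra_simps)
    ultimately show ?thesis using half full True IH \<open>T (bn div 2) = _\<close> by simp
  next
    case False
    then show ?thesis using half full pair_sum[of bn T] sym by simp
  qed
qed

lemma length_fulllist: "length (fulllist b n) = (\<Prod>i<n. b i + 1)"
  by (induction n) (simp_all add: length_concat o_def map_replicate_const sum_list_replicate)

lemma length_halflist: "length (halflist b n) = (\<Prod>i<n. b i + 1) div 2"
proof (induction n)
  case 0 thus ?case by simp
next
  case (Suc n)
  have "length (halflist b (Suc n)) = Suc (b n) div 2 * (\<Prod>i<n. b i + 1) + (if even (b n) then (\<Prod>i<n. b i + 1) div 2 else 0)"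
    using Suc by (simp add: length_concat o_def map_replicate_const sum_list_replicate length_fulllist)
  also have "\<dots> = (\<Prod>i<Suc n. b i + 1) div 2"
  proof (cases "even (b n)")
    case True
    then obtain m where m: "b n = 2 * m" by blast
    show ?thesis using True by (simp add: m) (simp add: algebra_simps)
  next
    case False
    then obtain m where m: "b n = 2 * m + 1" using oddE by blast
    show ?thesis using False by (simp add: m algebra_simps)
  qed
  finally show ?case .
qed

lemma elim_exists_aux:
  fixes Es :: "('a \<Rightarrow> real) list"
  shows "length Es = k \<Longrightarrow> finite A \<Longrightarrow> length Es < card A \<Longrightarrow>
    \<exists>lm. (\<exists>a\<in>A. lm a \<noteq> 0) \<and> (\<forall>E\<in>set Es. (\<Sum>a\<in>A. E a * lm a) = 0)"
proof (induction k arbitrary: Es A)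
  case 0
  then have Nil: "Es = []" by simp
  from 0 have "card A > 0" by simp
  then obtain a0 where "a0 \<in> A" by (metis card.empty ex_in_conv less_nat_zero_code)
  then show ?case using Nil by (intro exI[of _ "\<lambda>a. if a = a0 then 1 else 0"]) auto
next
  case (Suc k Es0 A)
  then obtain E Es where Es0: "Es0 = E # Es" and lenEs: "length Es = k" by (cases Es0) auto
  note Cons_prems = Suc.prems(2,3)[unfolded Es0]
  show ?case
  proof (cases "\<forall>a\<in>A. E a = 0")
    case True
    from Suc.IH[OF lenEs, of A] Cons_prems obtain lm where "\<exists>a\<in>A. lm a \<noteq> 0" "\<forall>E\<in>set Es. (\<Sum>a\<in>A. E a * lm a) = 0"
      by auto
    then show ?thesis using True unfolding Es0 by (intro exI[of _ lm]) auto
  next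
    case False
    then obtain a0 where a0: "a0 \<in> A" "E a0 \<noteq> 0" by auto
    define A' where "A' = A - {a0}"
    have fA': "finite A'" using Cons_prems unfolding A'_def by auto
    have cA': "card A' = card A - 1" unfolding A'_def using a0 Cons_prems by (simp add: card_Diff_singleton)
    define Es' where "Es' = map (\<lambda>F a. F a - F a0 / E a0 * E a) Es"
    have "length Es' < card A'" using Cons_prems cA' unfolding Es'_def by simp
    moreover have "length Es' = k" using lenEs unfolding Es'_def by simp
    ultimately obtain lm' where l1: "\<exists>a\<in>A'. lm' a \<noteq> 0"
      and l2: "\<forall>F\<in>set Es'. (\<Sum>a\<in>A'. F a * lm' a) = 0" using Suc.IH fA' by blast
    define lm where "lm = (\<lambda>a. if a = a0 then - (\<Sum>a'\<in>A'. E a' * lm' a') / E a0 else lm' a)"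
    have Aeq: "A = insert a0 A'" unfolding A'_def using a0 by auto
    have a0n: "a0 \<notin> A'" unfolding A'_def by auto
    have sumA: "(\<Sum>a\<in>A. F a * lm a) = F a0 * lm a0 + (\<Sum>a\<in>A'. F a * lm' a)" for F
    proof -
      have "(\<Sum>a\<in>A. F a * lm a) = F a0 * lm a0 + (\<Sum>a\<in>A'. F a * lm a)"
        unfolding Aeq using fA' a0n by simp
      moreover have "(\<Sum>a\<in>A'. F a * lm a) = (\<Sum>a\<in>A'. F a * lm' a)"
        using a0n by (intro sum.cong) (auto simp: lm_def)
      ultimately show ?thesis by simp
    qed
    have "(\<Sum>a\<in>A. E a * lm a) = 0" unfolding sumA using a0 by (simp add: lm_def)
    moreover have "(\<Sum>a\<in>A. F a * lm a) = 0" if F: "F \<in> set Es" for F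
    proof -
      have "(\<Sum>a\<in>A'. (F a - F a0 / E a0 * E a) * lm' a) = 0" using l2 F unfolding Es'_def by simp
      then have "(\<Sum>a\<in>A'. F a * lm' a) - F a0 / E a0 * (\<Sum>a\<in>A'. E a * lm' a) = 0"
        by (simp add: algebra_simps sum_subtractf sum_distrib_left)
      then show ?thesis unfolding sumA by (simp add: lm_def)
    qed
    moreover have "\<exists>a\<in>A. lm a \<noteq> 0" using l1 a0n unfolding Aeq lm_def by force
    ultimately show ?thesis unfolding Es0 by (intro exI[of _ lm]) auto
  qed
qed

lemma elim_exists:
  fixes Es :: "('a \<Rightarrow> real) list"
  shows "finite A \<Longrightarrow> length Es < card A \<Longrightarrow>
    \<exists>lm. (\<exists>a\<in>A. lm a \<noteq> 0) \<and> (\<forall>E\<in>set Es. (\<Sum>a\<in>A. E a * lm a) = 0)"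
  using elim_exists_aux by blast

lemma sum_list_sum_swap:
  fixes g :: "'a \<Rightarrow> 'b \<Rightarrow> real"
  shows "(\<Sum>x\<leftarrow>xs. \<Sum>a\<in>S. g a x) = (\<Sum>a\<in>S. \<Sum>x\<leftarrow>xs. g a x)"
  by (induction xs) (simp_all add: sum.distrib)

lemma core_lower:
  fixes Z :: "(real \<times> (nat \<Rightarrow> real)) list" and \<beta> :: "nat \<Rightarrow> nat" and m :: nat and K :: real
  assumes m: "1 \<le> m" and b0: "1 \<le> \<beta> 0" and K: "K \<noteq> 0"
  and mom: "\<And>\<alpha>. (\<forall>i\<ge>m. \<alpha> i = 0) \<Longrightarrow> (\<Sum>i<m. \<alpha> i) = (\<Sum>i<m. \<beta> i) \<Longrightarrow>
      (\<Sum>(c,z)\<leftarrow>Z. c * (\<Prod>i<m. z i ^ \<alpha> i)) = (if (\<forall>i<m. \<alpha> i = \<beta> i) then K else 0)"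
  shows "(\<Prod>i\<in>{1..<m}. \<beta> i + 1) \<le> length Z"
proof (rule ccontr)
  assume "\<not> ?thesis"
  then have lenZ: "length Z < (\<Prod>i\<in>{1..<m}. \<beta> i + 1)" by simp
  define I where "I = {1..<m}"
  define A where "A = PiE I (\<lambda>i. {0..\<beta> i})"
  have finA: "finite A" unfolding A_def I_def by (simp add: finite_PiE)
  have cardA: "card A = (\<Prod>i\<in>{1..<m}. \<beta> i + 1)" unfolding A_def I_def by (simp add: card_PiE)
  define Zp where "Zp = filter (\<lambda>(c,z). z 0 \<noteq> 0) Z"
  define Ef where "Ef = (\<lambda>z::nat\<Rightarrow>real. \<lambda>a::nat\<Rightarrow>nat. \<Prod>i\<in>I. (z i / z 0) ^ a i)"
  define Es where "Es = map (\<lambda>(c,z). Ef z) Zp"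
  have "length Es \<le> length Z" unfolding Es_def Zp_def by simp
  then have "length Es < card A" using lenZ cardA by linarith
  from elim_exists[OF finA this] obtain lm where lm1: "\<exists>a\<in>A. lm a \<noteq> 0"
    and lm2: "\<forall>E\<in>set Es. (\<Sum>a\<in>A. E a * lm a) = 0" by blast
  define S where "S = {a\<in>A. lm a \<noteq> 0}"
  have finS: "finite S" "S \<noteq> {}" using finA lm1 unfolding S_def by auto
  define deg where "deg = (\<lambda>a::nat\<Rightarrow>nat. \<Sum>i\<in>I. a i)"
  define D where "D = Max (deg ` S)"
  have "D \<in> deg ` S" unfolding D_def using finS by (intro Max_in) auto
  then obtain as where as: "as \<in> S" "deg as = D" by auto
  have degD: "deg a \<le> D" if "a \<in> S" for a
    unfolding D_def using finS that by (intro Max_ge) auto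
  have inA_le: "a i \<le> \<beta> i" if "a \<in> A" "i \<in> I" for a i
    using that unfolding A_def by (auto simp: PiE_iff)
  have asA: "as \<in> A" using as S_def by auto
  have Ieq: "{..<m} = insert 0 I" "0 \<notin> I" "finite I" unfolding I_def using m by auto
  define \<alpha> where "\<alpha> = (\<lambda>a i. if i = 0 then \<beta> 0 + D - deg a else if i < m then a i + (\<beta> i - as i) else 0)"
  have degle: "D \<le> (\<Sum>i\<in>I. \<beta> i)"
    unfolding as(2)[symmetric] deg_def using inA_le[OF asA] by (intro sum_mono) auto
  have sum_sub: "(\<Sum>i\<in>I. \<beta> i - as i) = (\<Sum>i\<in>I. \<beta> i) - D"
    unfolding as(2)[symmetric] deg_def using inA_le[OF asA] by (intro sum_subtractf_nat) auto
  have alpha_sum: "(\<Sum>i<m. \<alpha> a i) = (\<Sum>i<m. \<beta> i)" if aS: "a \<in> S" for a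
  proof -
    have "(\<Sum>i<m. \<alpha> a i) = \<alpha> a 0 + (\<Sum>i\<in>I. \<alpha> a i)" unfolding Ieq(1) using Ieq by simp
    also have "(\<Sum>i\<in>I. \<alpha> a i) = (\<Sum>i\<in>I. a i + (\<beta> i - as i))"
      by (intro sum.cong) (auto simp: \<alpha>_def I_def)
    also have "\<dots> = deg a + ((\<Sum>i\<in>I. \<beta> i) - D)" unfolding deg_def sum.distrib sum_sub ..
    finally have "(\<Sum>i<m. \<alpha> a i) = \<beta> 0 + D - deg a + (deg a + ((\<Sum>i\<in>I. \<beta> i) - D))"
      by (simp add: \<alpha>_def)
    also have "\<dots> = \<beta> 0 + (\<Sum>i\<in>I. \<beta> i)" using degD[OF aS] degle by simp
    also have "\<dots> = (\<Sum>i<m. \<beta> i)" unfolding Ieq(1) using Ieq by simp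
    finally show ?thesis .
  qed
  have alpha_supp: "\<forall>i\<ge>m. \<alpha> a i = 0" for a using m unfolding \<alpha>_def by auto
  have alpha_eq: "(\<forall>i<m. \<alpha> a i = \<beta> i) \<longleftrightarrow> a = as" if aS: "a \<in> S" for a
  proof
    assume H: "\<forall>i<m. \<alpha> a i = \<beta> i"
    have aA: "a \<in> A" using aS S_def by auto
    show "a = as"
    proof
      fix i
      show "a i = as i"
      proof (cases "i \<in> I")
        case True
        then have "i < m" "i \<noteq> 0" unfolding I_def by auto
        with H have "a i + (\<beta> i - as i) = \<beta> i" unfolding \<alpha>_def by auto
        moreover have "as i \<le> \<beta> i" using inA_le[OF asA True] .
        ultimately show ?thesis by simp
      next
        case False
        then show ?thesis using aA asA unfolding A_def by (auto simp: PiE_def extensional_def)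
      qed
    qed
  next
    assume "a = as"
    then show "\<forall>i<m. \<alpha> a i = \<beta> i" unfolding \<alpha>_def using as inA_le[OF asA] by (auto simp: I_def)
  qed
  define P where "P = (\<lambda>z::nat\<Rightarrow>real. \<Sum>a\<in>S. lm a * (\<Prod>i<m. z i ^ \<alpha> a i))"
  have P0: "P z = 0" if cz: "(c, z) \<in> set Z" for c z
  proof (cases "z 0 = 0")
    case True
    have pz: "(\<Prod>i<m. z i ^ \<alpha> a i) = 0" if "a \<in> S" for a
    proof -
      have "0 < \<alpha> a 0" using b0 degD[OF that] unfolding \<alpha>_def by simp
      then have "z 0 ^ \<alpha> a 0 = 0" using True by simp
      then show ?thesis using m by (intro prod_zero) auto
    qed
    show ?thesis unfolding P_def by (rule sum.neutral) (simp add: pz)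
  next
    case False
    then have "(c, z) \<in> set Zp" using cz unfolding Zp_def by auto
    then have "Ef z \<in> set Es" unfolding Es_def by force
    with lm2 have "(\<Sum>a\<in>A. Ef z a * lm a) = 0" by blast
    moreover have "(\<Sum>a\<in>A. Ef z a * lm a) = (\<Sum>a\<in>S. Ef z a * lm a)"
      unfolding S_def using finA by (intro sum.mono_neutral_right) auto
    ultimately have sumS: "(\<Sum>a\<in>S. Ef z a * lm a) = 0" by simp
    define Cz where "Cz = z 0 ^ (\<beta> 0 + D) * (\<Prod>i\<in>I. z i ^ (\<beta> i - as i))"
    have termeq: "(\<Prod>i<m. z i ^ \<alpha> a i) = Cz * Ef z a" if aS: "a \<in> S" for a
    proof -
      have "(\<Prod>i<m. z i ^ \<alpha> a i) = z 0 ^ \<alpha> a 0 * (\<Prod>i\<in>I. z i ^ \<alpha> a i)"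
        unfolding Ieq(1) using Ieq by simp
      also have "(\<Prod>i\<in>I. z i ^ \<alpha> a i) = (\<Prod>i\<in>I. z i ^ a i) * (\<Prod>i\<in>I. z i ^ (\<beta> i - as i))"
        unfolding prod.distrib[symmetric] by (intro prod.cong) (auto simp: \<alpha>_def I_def power_add)
      finally have lhs: "(\<Prod>i<m. z i ^ \<alpha> a i) = z 0 ^ \<alpha> a 0 * ((\<Prod>i\<in>I. z i ^ a i) * (\<Prod>i\<in>I. z i ^ (\<beta> i - as i)))" .
      have efeq: "Ef z a = (\<Prod>i\<in>I. z i ^ a i) / z 0 ^ deg a"
        unfolding Ef_def deg_def by (simp add: power_divide prod_dividef power_sum)
      have zeq: "z 0 ^ (\<beta> 0 + D) = z 0 ^ \<alpha> a 0 * z 0 ^ deg a"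
        unfolding \<alpha>_def using degD[OF aS] by (simp add: power_add[symmetric])
      have nz: "z 0 ^ deg a \<noteq> 0" using False by simp
      have "Cz * Ef z a = (z 0 ^ \<alpha> a 0 * z 0 ^ deg a) * (\<Prod>i\<in>I. z i ^ (\<beta> i - as i)) * ((\<Prod>i\<in>I. z i ^ a i) / z 0 ^ deg a)"
        unfolding Cz_def efeq zeq ..
      also have "\<dots> = z 0 ^ \<alpha> a 0 * ((\<Prod>i\<in>I. z i ^ a i) * (\<Prod>i\<in>I. z i ^ (\<beta> i - as i)))"
        using nz by (simp add: divide_simps mult_ac)
      finally show ?thesis using lhs by simp
    qed
    have "P z = (\<Sum>a\<in>S. lm a * (Cz * Ef z a))" unfolding P_def by (intro sum.cong) (auto simp: termeq)
    also have "\<dots> = Cz * (\<Sum>a\<in>S. Ef z a * lm a)" by (simp add: sum_distrib_left mult_ac)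
    finally show ?thesis using sumS by simp
  qed
  have "(\<Sum>(c,z)\<leftarrow>Z. c * P z) = 0"
  proof -
    have eq: "map (\<lambda>(c,z). c * P z) Z = map (\<lambda>_. 0) Z"
      by (rule map_cong[OF refl]) (auto simp: P0)
    show ?thesis by (subst eq) simp
  qed
  moreover have "(\<Sum>(c,z)\<leftarrow>Z. c * P z) = (\<Sum>a\<in>S. lm a * (\<Sum>(c,z)\<leftarrow>Z. c * (\<Prod>i<m. z i ^ \<alpha> a i)))"
  proof -
    have "(\<Sum>(c,z)\<leftarrow>Z. c * P z) = (\<Sum>x\<leftarrow>Z. \<Sum>a\<in>S. lm a * (fst x * (\<Prod>i<m. snd x i ^ \<alpha> a i)))"
      unfolding P_def by (simp add: split_def sum_distrib_left mult_ac)
    also have "\<dots> = (\<Sum>a\<in>S. \<Sum>x\<leftarrow>Z. lm a * (fst x * (\<Prod>i<m. snd x i ^ \<alpha> a i)))"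
      by (rule sum_list_sum_swap)
    also have "\<dots> = (\<Sum>a\<in>S. lm a * (\<Sum>(c,z)\<leftarrow>Z. c * (\<Prod>i<m. z i ^ \<alpha> a i)))"
      by (simp add: split_def sum_list_const_mult)
    finally show ?thesis .
  qed
  moreover have "\<dots> = (\<Sum>a\<in>S. lm a * (if a = as then K else 0))"
    by (intro sum.cong refl) (simp add: mom[OF alpha_supp alpha_sum] alpha_eq)
  moreover have "\<dots> = (\<Sum>a\<in>S. if a = as then lm a * K else 0)" by (intro sum.cong) auto
  moreover have "\<dots> = lm as * K" using as(1) finS by (simp add: sum.delta)
  ultimately have "lm as * K = 0" by simp
  moreover have "lm as \<noteq> 0" using as(1) S_def by auto
  ultimately show False using K by simp
qed

definition rderiv :: "(real \<Rightarrow> real) \<Rightarrow> real \<Rightarrow> real" where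
  "rderiv f x = (THE D. (f has_real_derivative D) (at x))"

lemma rderiv_eq: "(f has_real_derivative D) (at x) \<Longrightarrow> rderiv f x = D"
  unfolding rderiv_def by (rule the_equality) (auto intro: DERIV_unique)

definition pd :: "nat \<Rightarrow> ((nat \<Rightarrow> real) \<Rightarrow> real) \<Rightarrow> ((nat \<Rightarrow> real) \<Rightarrow> real)" where
  "pd i F = (\<lambda>\<theta>. rderiv (\<lambda>x. F (\<theta>(i := x))) (\<theta> i))"

fun Dm :: "nat list \<Rightarrow> ((nat \<Rightarrow> real) \<Rightarrow> real) \<Rightarrow> ((nat \<Rightarrow> real) \<Rightarrow> real)" where
  "Dm [] F = F"
| "Dm (i # is) F = pd i (Dm is F)"

definition AS :: "nat \<Rightarrow> (real \<times> (nat \<Rightarrow> real) \<times> real) list \<Rightarrow> nat \<Rightarrow> (nat \<Rightarrow> real) \<Rightarrow> real" where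
  "AS n L e \<theta> = (\<Sum>(c,u,\<kappa>)\<leftarrow>L. c * (lin n u \<theta> + \<kappa>)^e)"

lemma lin_upd: "i < n \<Longrightarrow> lin n u (\<theta>(i := x)) = lin n u \<theta> + u i * (x - \<theta> i)"
proof -
  assume i: "i < n"
  have "lin n u (\<theta>(i := x)) = (\<Sum>k<n. u k * \<theta> k + (if k = i then u i * (x - \<theta> i) else 0))"
    unfolding lin_def by (intro sum.cong) (auto simp: algebra_simps)
  also have "\<dots> = lin n u \<theta> + u i * (x - \<theta> i)"
    unfolding lin_def sum.distrib using i by (simp add: sum.delta)
  finally show ?thesis .
qed

lemma AS_deriv:
  assumes i: "i < n"
  shows "((\<lambda>x. AS n L e (\<theta>(i := x))) has_real_derivative
           AS n (map (\<lambda>(c,u,\<kappa>). (c * real e * u i, u, \<kappa>)) L) (e - 1) (\<theta>(i := x))) (at x)"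
proof (induction L)
  case Nil
  then show ?case by (simp add: AS_def)
next
  case (Cons a L)
  obtain c u \<kappa> where a: "a = (c, u, \<kappa>)" by (cases a) auto
  have d: "((\<lambda>x. c * (lin n u (\<theta>(i := x)) + \<kappa>)^e) has_real_derivative
             c * real e * u i * (lin n u (\<theta>(i := x)) + \<kappa>)^(e - 1)) (at x)"
    unfolding lin_upd[OF i]
    by (auto intro!: derivative_eq_intros simp: algebra_simps)
  have eq1: "(\<lambda>x. AS n (a # L) e (\<theta>(i := x))) = (\<lambda>x. c * (lin n u (\<theta>(i := x)) + \<kappa>)^e + AS n L e (\<theta>(i := x)))"
    unfolding AS_def a by simp
  have eq2: "AS n (map (\<lambda>(c,u,\<kappa>). (c * real e * u i, u, \<kappa>)) (a # L)) (e - 1) (\<theta>(i := x))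
     = c * real e * u i * (lin n u (\<theta>(i := x)) + \<kappa>)^(e - 1) + AS n (map (\<lambda>(c,u,\<kappa>). (c * real e * u i, u, \<kappa>)) L) (e - 1) (\<theta>(i := x))"
    unfolding AS_def a by simp
  show ?case unfolding eq1 eq2 by (rule DERIV_add[OF d Cons.IH])
qed

lemma pd_AS: "i < n \<Longrightarrow> pd i (AS n L e) = AS n (map (\<lambda>(c,u,\<kappa>). (c * real e * u i, u, \<kappa>)) L) (e - 1)"
  unfolding pd_def by (rule ext) (use AS_deriv[THEN rderiv_eq] in simp)

fun ffr :: "nat \<Rightarrow> nat \<Rightarrow> real" where
  "ffr e 0 = 1"
| "ffr e (Suc m) = ffr e m * real (e - m)"

lemma Dm_AS: "set is \<subseteq> {..<n} \<Longrightarrow>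
  Dm is (AS n L e) = AS n (map (\<lambda>(c,u,\<kappa>). (c * ffr e (length is) * (\<Prod>i\<leftarrow>is. u i), u, \<kappa>)) L) (e - length is)"
proof (induction "is")
  case Nil
  then show ?case by (simp add: AS_def split_def)
next
  case (Cons i "is")
  then have i: "i < n" and sub: "set is \<subseteq> {..<n}" by auto
  have "Dm (i # is) (AS n L e) = pd i (AS n (map (\<lambda>(c,u,\<kappa>). (c * ffr e (length is) * (\<Prod>i\<leftarrow>is. u i), u, \<kappa>)) L) (e - length is))"
    using Cons.IH[OF sub] by simp
  also have "\<dots> = AS n (map (\<lambda>(c,u,\<kappa>). (c * ffr e (length (i # is)) * (\<Prod>i\<leftarrow>i # is. u i), u, \<kappa>)) L) (e - length (i # is))"
    unfolding pd_AS[OF i] by (simp add: split_def o_def mult_ac diff_diff_add)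
  finally show ?case .
qed

lemma AS_zero: "AS n L e (\<lambda>_. 0) = (\<Sum>(c,u,\<kappa>)\<leftarrow>L. c * \<kappa>^e)"
  unfolding AS_def lin_def by simp

lemma monomial_upd: "i < n \<Longrightarrow> monomial n a (\<theta>(i := x)) = x ^ a i * (\<Prod>k\<in>{..<n} - {i}. \<theta> k ^ a k)"
  unfolding monomial_def by (subst prod.remove[of _ i]) (auto intro!: prod.cong)

lemma monomial_split: "i < n \<Longrightarrow> monomial n a \<theta> = \<theta> i ^ a i * (\<Prod>k\<in>{..<n} - {i}. \<theta> k ^ a k)"
  using monomial_upd[of i n a \<theta> "\<theta> i"] by simp

lemma pd_mono: "i < n \<Longrightarrow> pd i (\<lambda>\<theta>. K * monomial n a \<theta>) = (\<lambda>\<theta>. (K * real (a i)) * monomial n (a(i := a i - 1)) \<theta>)"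
proof (rule ext)
  fix \<theta> :: "nat \<Rightarrow> real" assume i: "i < n"
  define R where "R = (\<Prod>k\<in>{..<n} - {i}. \<theta> k ^ a k)"
  have R2: "(\<Prod>k\<in>{..<n} - {i}. \<theta> k ^ (a(i := a i - 1)) k) = R"
    unfolding R_def by (intro prod.cong) auto
  have "((\<lambda>x. K * monomial n a (\<theta>(i := x))) has_real_derivative K * (real (a i) * x ^ (a i - 1)) * R) (at x)" for x
    unfolding monomial_upd[OF i] R_def[symmetric]
    by (auto intro!: derivative_eq_intros)
  then have "pd i (\<lambda>\<theta>. K * monomial n a \<theta>) \<theta> = K * (real (a i) * \<theta> i ^ (a i - 1)) * R"
    unfolding pd_def by (simp add: rderiv_eq)
  also have "\<dots> = (K * real (a i)) * monomial n (a(i := a i - 1)) \<theta>"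
    using monomial_split[OF i, of "a(i := a i - 1)" \<theta>] R2 by simp
  finally show "pd i (\<lambda>\<theta>. K * monomial n a \<theta>) \<theta> = (K * real (a i)) * monomial n (a(i := a i - 1)) \<theta>" .
qed

fun subm :: "nat list \<Rightarrow> (nat \<Rightarrow> nat) \<Rightarrow> (nat \<Rightarrow> nat)" where
  "subm [] a = a"
| "subm (i # is) a = (subm is a)(i := subm is a i - 1)"

fun cfm :: "nat list \<Rightarrow> (nat \<Rightarrow> nat) \<Rightarrow> real" where
  "cfm [] a = 1"
| "cfm (i # is) a = cfm is a * real (subm is a i)"

lemma Dm_mono: "set is \<subseteq> {..<n} \<Longrightarrow> Dm is (\<lambda>\<theta>. K * monomial n a \<theta>) = (\<lambda>\<theta>. (K * cfm is a) * monomial n (subm is a) \<theta>)"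
proof (induction "is")
  case Nil then show ?case by simp
next
  case (Cons i "is")
  then have i: "i < n" and sub: "set is \<subseteq> {..<n}" by auto
  have "Dm (i # is) (\<lambda>\<theta>. K * monomial n a \<theta>) = pd i (\<lambda>\<theta>. (K * cfm is a) * monomial n (subm is a) \<theta>)"
    by (simp only: Dm.simps Cons.IH[OF sub])
  also have "\<dots> = (\<lambda>\<theta>. ((K * cfm is a) * real (subm is a i)) * monomial n ((subm is a)(i := subm is a i - 1)) \<theta>)"
    by (rule pd_mono[OF i])
  finally show ?case by (simp add: mult.assoc fun_upd_def)
qed

lemma subm_count: "subm is a k = a k - count_list is k"
  by (induction "is") auto

lemma cfm_zero: "count_list xs k > a k \<Longrightarrow> cfm xs a = 0"
proof (induction xs)
  case Nil then show ?case by simp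
next
  case (Cons i "is")
  show ?case
  proof (cases "count_list is k > a k")
    case True then show ?thesis using Cons.IH by simp
  next
    case False
    with Cons.prems have "i = k" "count_list is k = a k" by (auto split: if_splits)
    then show ?thesis by (simp add: subm_count)
  qed
qed

lemma cfm_nonzero: "(\<forall>k. count_list is k \<le> a k) \<Longrightarrow> cfm is a \<noteq> 0"
proof (induction "is")
  case Nil then show ?case by simp
next
  case (Cons i "is")
  have "\<forall>k. count_list is k \<le> a k"
  proof
    fix k
    have "count_list is k \<le> count_list (i # is) k" by simp
    then show "count_list is k \<le> a k" using Cons.prems[rule_format, of k] by linarith
  qed
  moreover have "count_list is i < a i" using Cons.prems[rule_format, of i] by simp
  ultimately show ?case using Cons.IH by (simp add: subm_count)
qed

lemma monomial_zero: "monomial n a (\<lambda>_. 0) = (if \<forall>k<n. a k = 0 then 1 else 0)"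
  unfolding monomial_def by (auto simp: zero_power)

lemma Dm_mono_zero:
  assumes "set is \<subseteq> {..<n}"
  shows "Dm is (monomial n b) (\<lambda>_. 0) = (if \<forall>k<n. count_list is k = b k then cfm is b else 0)"
    and "(\<forall>k<n. count_list is k = b k) \<Longrightarrow> cfm is b \<noteq> 0"
proof -
  have D0: "Dm is (\<lambda>\<theta>. 1 * monomial n b \<theta>) (\<lambda>_. 0) = cfm is b * monomial n (subm is b) (\<lambda>_. 0)"
    unfolding Dm_mono[OF assms, of 1 b] by simp
  have "(\<lambda>\<theta>. 1 * monomial n b \<theta>) = monomial n b" by simp
  with D0 have D: "Dm is (monomial n b) (\<lambda>_. 0) = cfm is b * monomial n (subm is b) (\<lambda>_. 0)" by simp
  have out: "count_list is k = 0" if "k \<ge> n" for k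
    using assms that by (intro count_notin) auto
  show "(\<forall>k<n. count_list is k = b k) \<Longrightarrow> cfm is b \<noteq> 0"
  proof -
    assume H: "\<forall>k<n. count_list is k = b k"
    have "\<forall>k. count_list is k \<le> b k"
    proof
      fix k show "count_list is k \<le> b k" using H out[of k] by (cases "k < n") auto
    qed
    then show ?thesis by (rule cfm_nonzero)
  qed
  show "Dm is (monomial n b) (\<lambda>_. 0) = (if \<forall>k<n. count_list is k = b k then cfm is b else 0)"
  proof (cases "\<forall>k<n. count_list is k = b k")
    case True
    have z: "\<forall>k<n. subm is b k = 0"
    proof (intro allI impI)
      fix k assume "k < n"
      then have "count_list is k = b k" using True by blast
      then show "subm is b k = 0" unfolding subm_count by simp
    qed
    have m1: "monomial n (subm is b) (\<lambda>_. 0) = 1" unfolding monomial_zero by (rule if_P[OF z])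
    show ?thesis unfolding D m1 if_P[OF True] by simp
  next
    case False
    then obtain k where k: "k < n" "count_list is k \<noteq> b k" by auto
    show ?thesis
    proof (cases "count_list is k > b k")
      case True
      have c0: "cfm is b = 0" by (rule cfm_zero[where xs="is" and a=b and k=k, OF True])
      show ?thesis unfolding D c0 if_not_P[OF False] by simp
    next
      case False2: False
      have "count_list is k < b k" using False2 k(2) by linarith
      then have snz: "subm is b k \<noteq> 0" unfolding subm_count by simp
      have nz: "\<not> (\<forall>k<n. subm is b k = 0)"
      proof
        assume "\<forall>k<n. subm is b k = 0"
        then have "subm is b k = 0" using k(1) by simp
        then show False using snz by simp
      qed
      have m0: "monomial n (subm is b) (\<lambda>_. 0) = 0" unfolding monomial_zero by (rule if_not_P[OF nz])
      show ?thesis unfolding D m0 if_not_P[OF False] by simp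
    qed
  qed
qed

fun canon :: "(nat \<Rightarrow> nat) \<Rightarrow> nat \<Rightarrow> nat list" where
  "canon \<alpha> 0 = []"
| "canon \<alpha> (Suc n) = canon \<alpha> n @ replicate (\<alpha> n) n"

lemma canon_set: "set (canon \<alpha> n) \<subseteq> {..<n}"
  by (induction n) auto

lemma canon_length: "length (canon \<alpha> n) = (\<Sum>k<n. \<alpha> k)"
  by (induction n) auto

lemma count_replicate: "count_list (replicate m x) y = (if x = y then m else 0)"
  by (induction m) auto

lemma canon_count: "count_list (canon \<alpha> n) k = (if k < n then \<alpha> k else 0)"
  by (induction n) (auto simp: count_replicate)

lemma canon_prod: "(\<Prod>i\<leftarrow>canon \<alpha> n. u i) = (\<Prod>k<n. (u k :: real) ^ \<alpha> k)"
  by (induction n) auto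

lemma ffr_nz: "m \<le> e \<Longrightarrow> ffr e m \<noteq> 0"
  by (induction m) auto

lemma canon_cong: "(\<forall>k<n. \<alpha> k = \<beta> k) \<Longrightarrow> canon \<alpha> n = canon \<beta> n"
  by (induction n) auto

lemma sum_list_neg: "(\<Sum>x\<leftarrow>xs. - f x) = - (\<Sum>x\<leftarrow>xs. (f x :: real))"
  by (induction xs) auto

lemma moments:
  assumes eq: "\<And>\<theta>. monomial n b \<theta> = AS n L e \<theta>" and sub: "set is \<subseteq> {..<n}"
  shows "(\<Sum>(c,u,\<kappa>)\<leftarrow>L. c * (\<Prod>i\<leftarrow>is. u i) * \<kappa>^(e - length is)) * ffr e (length is)
         = (if \<forall>k<n. count_list is k = b k then cfm is b else 0)"
proof -
  have "monomial n b = AS n L e" using eq by auto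
  then have "Dm is (monomial n b) (\<lambda>_. 0) = Dm is (AS n L e) (\<lambda>_. 0)" by simp
  also have "\<dots> = (\<Sum>(c,u,\<kappa>)\<leftarrow>L. c * ffr e (length is) * (\<Prod>i\<leftarrow>is. u i) * \<kappa>^(e - length is))"
    unfolding Dm_AS[OF sub] AS_zero by (simp add: split_def o_def)
  also have "\<dots> = ffr e (length is) * (\<Sum>(c,u,\<kappa>)\<leftarrow>L. c * (\<Prod>i\<leftarrow>is. u i) * \<kappa>^(e - length is))"
    unfolding sum_list_const_mult[symmetric] by (intro arg_cong[where f=sum_list] map_cong) (auto simp: mult_ac)
  also have "\<dots> = (\<Sum>(c,u,\<kappa>)\<leftarrow>L. c * (\<Prod>i\<leftarrow>is. u i) * \<kappa>^(e - length is)) * ffr e (length is)"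
    by (rule mult.commute)
  finally show ?thesis using Dm_mono_zero(1)[OF sub] by simp
qed

lemma lower_even:
  assumes n: "1 \<le> n" and b0: "1 \<le> b 0" and s: "s = (\<Sum>i<n. b i)"
    and dc: "is_DC_even n s (monomial n b) g h"
  shows "(\<Prod>i\<in>{1..<n}. b i + 1) \<le> length g + length h"
proof -
  define L where "L = map (\<lambda>(a,u). (a,u,0::real)) g @ map (\<lambda>(a,u). (-a,u,0::real)) h"
  have eq: "monomial n b \<theta> = AS n L s \<theta>" for \<theta>
  proof -
    have "monomial n b \<theta> = (\<Sum>(a, u)\<leftarrow>g. a * lin n u \<theta> ^ s) - (\<Sum>(a, u)\<leftarrow>h. a * lin n u \<theta> ^ s)"
      using dc unfolding is_DC_even_def by blast
    also have "\<dots> = AS n L s \<theta>"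
      unfolding AS_def L_def by (simp add: split_def o_def sum_list_neg)
    finally show ?thesis .
  qed
  define Z where "Z = map (\<lambda>(c,u,\<kappa>::real). (c,u)) L"
  have lenZ: "length Z = length g + length h" unfolding Z_def L_def by simp
  define K where "K = cfm (canon b n) b / ffr s s"
  have cs: "\<forall>k<n. count_list (canon b n) k = b k" by (simp add: canon_count)
  have lencb: "length (canon b n) = s" by (simp add: canon_length s)
  have K: "K \<noteq> 0" unfolding K_def
    using Dm_mono_zero(2)[OF canon_set cs] ffr_nz[of s s] by simp
  have "(\<Prod>i\<in>{1..<n}. b i + 1) \<le> length Z"
  proof (rule core_lower[where m=n and \<beta>=b, OF n b0 K])
    fix \<alpha> :: "nat \<Rightarrow> nat"
    assume supp: "\<forall>i\<ge>n. \<alpha> i = 0" and sm: "(\<Sum>i<n. \<alpha> i) = (\<Sum>i<n. b i)"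
    have len: "length (canon \<alpha> n) = s" using sm s by (simp add: canon_length)
    have M: "(\<Sum>(c,u,\<kappa>)\<leftarrow>L. c * (\<Prod>i\<leftarrow>canon \<alpha> n. u i) * \<kappa>^(s - length (canon \<alpha> n))) * ffr s (length (canon \<alpha> n))
         = (if \<forall>k<n. count_list (canon \<alpha> n) k = b k then cfm (canon \<alpha> n) b else 0)"
      by (rule moments[OF eq canon_set])
    have lhs: "(\<Sum>(c,z)\<leftarrow>Z. c * (\<Prod>i<n. z i ^ \<alpha> i)) = (\<Sum>(c,u,\<kappa>)\<leftarrow>L. c * (\<Prod>i\<leftarrow>canon \<alpha> n. u i) * \<kappa>^(s - length (canon \<alpha> n)))"
      unfolding Z_def len by (simp add: split_def o_def canon_prod)
    have cond: "(\<forall>k<n. count_list (canon \<alpha> n) k = b k) \<longleftrightarrow> (\<forall>i<n. \<alpha> i = b i)"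
      by (simp add: canon_count)
    show "(\<Sum>(c,z)\<leftarrow>Z. c * (\<Prod>i<n. z i ^ \<alpha> i)) = (if \<forall>i<n. \<alpha> i = b i then K else 0)"
    proof (cases "\<forall>i<n. \<alpha> i = b i")
      case True
      then have "canon \<alpha> n = canon b n" by (rule canon_cong)
      then show ?thesis using M True cond ffr_nz[of s s] unfolding lhs len K_def
        by (simp add: field_simps)
    next
      case False
      have "(\<Sum>(c,u,\<kappa>)\<leftarrow>L. c * (\<Prod>i\<leftarrow>canon \<alpha> n. u i) * \<kappa>^(s - length (canon \<alpha> n))) * ffr s (length (canon \<alpha> n)) = 0"
        using M cond False by simp
      then have Z0: "(\<Sum>(c,u,\<kappa>)\<leftarrow>L. c * (\<Prod>i\<leftarrow>canon \<alpha> n. u i) * \<kappa>^(s - length (canon \<alpha> n))) = 0"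
        using ffr_nz[of s s] len by simp
      show ?thesis unfolding lhs if_not_P[OF False] by (rule Z0)
    qed
  qed
  then show ?thesis using lenZ by simp
qed

definition zf :: "(nat \<Rightarrow> real) \<Rightarrow> real \<Rightarrow> nat \<Rightarrow> real" where
  "zf u \<kappa> = (\<lambda>i. if i = 0 then \<kappa> else u (i - 1))"

lemma lower_odd:
  assumes n: "1 \<le> n" and s: "s = (\<Sum>i<n. b i)"
    and dc: "is_DC_odd n s (monomial n b) g h"
  shows "(\<Prod>i<n. b i + 1) \<le> length g + length h"
proof -
  define L where "L = g @ map (\<lambda>(a,u,\<kappa>). (-a,u,\<kappa>)) h"
  have eq: "monomial n b \<theta> = AS n L (s + 1) \<theta>" for \<theta>
  proof -
    have "monomial n b \<theta> = (\<Sum>(a, u, k)\<leftarrow>g. a * (lin n u \<theta> + k) ^ (s + 1)) - (\<Sum>(a, u, k)\<leftarrow>h. a * (lin n u \<theta> + k) ^ (s + 1))"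
      using dc unfolding is_DC_odd_def by blast
    also have "\<dots> = AS n L (s + 1) \<theta>"
      unfolding AS_def L_def by (simp add: split_def o_def sum_list_neg)
    finally show ?thesis .
  qed
  define Z where "Z = map (\<lambda>(c,u,\<kappa>). (c, zf u \<kappa>)) L"
  have lenZ: "length Z = length g + length h" unfolding Z_def L_def by simp
  define \<beta> where "\<beta> = (\<lambda>i. if i = 0 then 1 else b (i - 1))"
  define K where "K = cfm (canon b n) b / ffr (s + 1) s"
  have cs: "\<forall>k<n. count_list (canon b n) k = b k" by (simp add: canon_count)
  have K: "K \<noteq> 0" unfolding K_def
    using Dm_mono_zero(2)[OF canon_set cs] ffr_nz[of s "s + 1"] by simp
  have sumb: "(\<Sum>i<Suc n. \<beta> i) = s + 1" unfolding sum.lessThan_Suc_shift by (simp add: \<beta>_def s)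
  have "(\<Prod>i\<in>{1..<Suc n}. \<beta> i + 1) \<le> length Z"
  proof (rule core_lower[where m = "Suc n"])
    show "1 \<le> Suc n" "1 \<le> \<beta> 0" "K \<noteq> 0" using K by (auto simp: \<beta>_def)
    fix \<alpha> :: "nat \<Rightarrow> nat"
    assume supp: "\<forall>i\<ge>Suc n. \<alpha> i = 0" and sm: "(\<Sum>i<Suc n. \<alpha> i) = (\<Sum>i<Suc n. \<beta> i)"
    define \<alpha>' where "\<alpha>' = (\<lambda>k. \<alpha> (Suc k))"
    have "(\<Sum>i<Suc n. \<alpha> i) = \<alpha> 0 + (\<Sum>k<n. \<alpha>' k)" unfolding \<alpha>'_def by (rule sum.lessThan_Suc_shift)
    then have sm': "\<alpha> 0 + (\<Sum>k<n. \<alpha>' k) = s + 1" using sm sumb by simp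
    have len: "length (canon \<alpha>' n) = s + 1 - \<alpha> 0" using sm' by (simp add: canon_length)
    have e0: "s + 1 - length (canon \<alpha>' n) = \<alpha> 0" using sm' len by simp
    have M: "(\<Sum>(c,u,\<kappa>)\<leftarrow>L. c * (\<Prod>i\<leftarrow>canon \<alpha>' n. u i) * \<kappa>^(s + 1 - length (canon \<alpha>' n))) * ffr (s + 1) (length (canon \<alpha>' n))
         = (if \<forall>k<n. count_list (canon \<alpha>' n) k = b k then cfm (canon \<alpha>' n) b else 0)"
      by (rule moments[OF eq canon_set])
    have prodz: "(\<Prod>i<Suc n. zf u \<kappa> i ^ \<alpha> i) = \<kappa> ^ \<alpha> 0 * (\<Prod>k<n. u k ^ \<alpha>' k)" for u \<kappa>
      unfolding prod.lessThan_Suc_shift by (simp add: zf_def \<alpha>'_def)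
    have lhs: "(\<Sum>(c,z)\<leftarrow>Z. c * (\<Prod>i<Suc n. z i ^ \<alpha> i)) = (\<Sum>(c,u,\<kappa>)\<leftarrow>L. c * (\<Prod>i\<leftarrow>canon \<alpha>' n. u i) * \<kappa>^(s + 1 - length (canon \<alpha>' n)))"
      unfolding Z_def e0 by (simp add: split_def o_def canon_prod prodz mult_ac del: prod.lessThan_Suc)
    have cond: "(\<forall>k<n. count_list (canon \<alpha>' n) k = b k) \<longleftrightarrow> (\<forall>i<Suc n. \<alpha> i = \<beta> i)"
    proof
      assume H: "\<forall>k<n. count_list (canon \<alpha>' n) k = b k"
      then have H': "\<forall>k<n. \<alpha>' k = b k" by (simp add: canon_count)
      then have "(\<Sum>k<n. \<alpha>' k) = s" unfolding s by simp
      then have "\<alpha> 0 = 1" using sm' by simp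
      then show "\<forall>i<Suc n. \<alpha> i = \<beta> i" using H' unfolding \<beta>_def \<alpha>'_def
        by (auto simp: less_Suc_eq_0_disj)
    next
      assume "\<forall>i<Suc n. \<alpha> i = \<beta> i"
      then show "\<forall>k<n. count_list (canon \<alpha>' n) k = b k" unfolding \<beta>_def \<alpha>'_def
        by (auto simp: canon_count)
    qed
    show "(\<Sum>(c,z)\<leftarrow>Z. c * (\<Prod>i<Suc n. z i ^ \<alpha> i)) = (if \<forall>i<Suc n. \<alpha> i = \<beta> i then K else 0)"
    proof (cases "\<forall>i<Suc n. \<alpha> i = \<beta> i")
      case True
      then have H': "\<forall>k<n. \<alpha>' k = b k" unfolding \<alpha>'_def \<beta>_def by auto
      then have "canon \<alpha>' n = canon b n" by (rule canon_cong)
      moreover have "length (canon b n) = s" by (simp add: canon_length s)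
      ultimately show ?thesis using M True cond ffr_nz[of s "s + 1"] unfolding lhs K_def
        by (simp add: field_simps)
    next
      case False
      have fnz: "ffr (s + 1) (length (canon \<alpha>' n)) \<noteq> 0" using len by (intro ffr_nz) simp
      have "(\<Sum>(c,u,\<kappa>)\<leftarrow>L. c * (\<Prod>i\<leftarrow>canon \<alpha>' n. u i) * \<kappa>^(s + 1 - length (canon \<alpha>' n))) * ffr (s + 1) (length (canon \<alpha>' n)) = 0"
        using M cond False by simp
      then have Z0: "(\<Sum>(c,u,\<kappa>)\<leftarrow>L. c * (\<Prod>i\<leftarrow>canon \<alpha>' n. u i) * \<kappa>^(s + 1 - length (canon \<alpha>' n))) = 0"
        using fnz by simp
      show ?thesis unfolding lhs if_not_P[OF False] by (rule Z0)
    qed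
  qed
  moreover have "(\<Prod>i\<in>{1..<Suc n}. \<beta> i + 1) = (\<Prod>i<n. b i + 1)"
  proof -
    have "{1..<Suc n} = Suc ` {..<n}" by (simp add: image_Suc_lessThan atLeastLessThanSuc_atLeastAtMost)
    then have "(\<Prod>i\<in>{1..<Suc n}. \<beta> i + 1) = (\<Prod>k<n. \<beta> (Suc k) + 1)"
      by (simp add: prod.reindex)
    then show ?thesis unfolding \<beta>_def by simp
  qed
  ultimately show ?thesis using lenZ by simp
qed

lemma sign_split:
  fixes L :: "(real \<times> 'a) list"
  shows "(\<Sum>(w,u)\<leftarrow>L. w * F u) = (\<Sum>(w,u)\<leftarrow>filter (\<lambda>(w,u). 0 < w) L. w * F u)
     - (\<Sum>(w,u)\<leftarrow>map (\<lambda>(w,u). (- w, u)) (filter (\<lambda>(w,u). w < 0) L). w * F u)"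
  by (induction L) auto

lemma len_split: "length (filter (\<lambda>(w,u). 0 < w) L) + length (filter (\<lambda>(w,u). w < (0::real)) L) \<le> length L"
  by (induction L) auto

lemma upper_even:
  assumes n: "1 \<le> n" and b0: "1 \<le> b 0" and s: "s = (\<Sum>i<n. b i)" and ev: "even s"
  shows "\<exists>g h. is_DC_even n s (monomial n b) g h \<and> length g + length h \<le> (\<Prod>i<n. b i + 1) div 2"
proof -
  define H where "H = halflist b n"
  have Bs: "Bs b n = s" unfolding Bs_def s ..
  have spos: "0 < s" using n b0 unfolding s by (metis (no_types, lifting) gr0I le_zero_eq lessThan_iff less_le_trans not_one_le_zero sum_eq_0_iff finite_lessThan zero_less_one)
  have val: "2 * (\<Sum>(w,u)\<leftarrow>H. w * (lin n u \<theta>)^s) = fact s * monomial n b \<theta>" for \<theta>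
  proof -
    have "2 * (\<Sum>(w,u)\<leftarrow>H. w * (lin n u \<theta>)^s) = (\<Sum>(w,u)\<leftarrow>fulllist b n. w * (lin n u \<theta>)^s)"
      unfolding H_def by (rule half_val) (use spos ev Bs in auto)
    also have "\<dots> = (\<Sum>(w,u)\<leftarrow>fulllist b n. w * (lin n u \<theta> + 0)^s)" by simp
    also have "\<dots> = fact s * monomial n b \<theta>" using full_G[of s b n \<theta> 0] Bs by simp
    finally show ?thesis .
  qed
  define L where "L = map (\<lambda>(w,u). (2 * w / fact s, u)) H"
  have valL: "monomial n b \<theta> = (\<Sum>(w,u)\<leftarrow>L. w * (lin n u \<theta>)^s)" for \<theta>
  proof -
    have "(\<Sum>(w,u)\<leftarrow>L. w * (lin n u \<theta>)^s) = (2 / fact s) * (\<Sum>(w,u)\<leftarrow>H. w * (lin n u \<theta>)^s)"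
      unfolding L_def sum_list_const_mult[symmetric] by (simp add: split_def o_def mult.assoc)
    also have "\<dots> = monomial n b \<theta>" using val[of \<theta>] by (simp add: field_simps)
    finally show ?thesis by simp
  qed
  define g where "g = filter (\<lambda>(w,u). 0 < w) L"
  define h where "h = map (\<lambda>(w,u). (- w, u)) (filter (\<lambda>(w,u). w < 0) L)"
  have "is_DC_even n s (monomial n b) g h"
    unfolding is_DC_even_def
  proof (intro conjI allI)
    show "\<forall>(a, u)\<in>set (g @ h). 0 < a" unfolding g_def h_def by auto
    fix \<theta>
    show "monomial n b \<theta> = (\<Sum>(a, u)\<leftarrow>g. a * lin n u \<theta> ^ s) - (\<Sum>(a, u)\<leftarrow>h. a * lin n u \<theta> ^ s)"
      unfolding valL g_def h_def by (rule sign_split)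
  qed
  moreover have "length g + length h \<le> (\<Prod>i<n. b i + 1) div 2"
    using len_split[of L] unfolding g_def h_def L_def H_def by (simp add: length_halflist)
  ultimately show ?thesis by blast
qed

lemma upper_odd:
  assumes s: "s = (\<Sum>i<n. b i)"
  shows "\<exists>g h. is_DC_odd n s (monomial n b) g h \<and> length g + length h \<le> (\<Prod>i<n. b i + 1)"
proof -
  have Bs: "Bs b n = s" unfolding Bs_def s ..
  define L where "L = map (\<lambda>(w,u). (w / fact (s + 1), u)) (fulllist b n)"
  have valL: "monomial n b \<theta> = (\<Sum>(w,u)\<leftarrow>L. w * (lin n u \<theta> + 1)^(s + 1))" for \<theta>
  proof -
    have v: "(\<Sum>(w,u)\<leftarrow>fulllist b n. w * (lin n u \<theta> + 1)^(s + 1)) = fact (s + 1) * monomial n b \<theta>"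
      using full_G[of "s + 1" b n \<theta> 1] Bs by simp
    have "(\<Sum>(w,u)\<leftarrow>L. w * (lin n u \<theta> + 1)^(s + 1)) = (1 / fact (s + 1)) * (\<Sum>(w,u)\<leftarrow>fulllist b n. w * (lin n u \<theta> + 1)^(s + 1))"
      unfolding L_def sum_list_const_mult[symmetric] by (simp add: split_def o_def)
    also have "\<dots> = monomial n b \<theta>" using v by simp
    finally show ?thesis by simp
  qed
  define g0 where "g0 = filter (\<lambda>(w,u). 0 < w) L"
  define h0 where "h0 = map (\<lambda>(w,u). (- w, u)) (filter (\<lambda>(w,u). w < 0) L)"
  define g where "g = map (\<lambda>(w,u). (w, u, 1::real)) g0"
  define h where "h = map (\<lambda>(w,u). (w, u, 1::real)) h0"
  have "is_DC_odd n s (monomial n b) g h"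
    unfolding is_DC_odd_def
  proof (intro conjI allI)
    show "\<forall>(a, u, k)\<in>set (g @ h). 0 < a" unfolding g_def h_def g0_def h0_def by auto
    fix \<theta>
    have "monomial n b \<theta> = (\<Sum>(w,u)\<leftarrow>g0. w * (lin n u \<theta> + 1)^(s + 1)) - (\<Sum>(w,u)\<leftarrow>h0. w * (lin n u \<theta> + 1)^(s + 1))"
      unfolding valL g0_def h0_def by (rule sign_split)
    then show "monomial n b \<theta> = (\<Sum>(a, u, k)\<leftarrow>g. a * (lin n u \<theta> + k) ^ (s + 1)) - (\<Sum>(a, u, k)\<leftarrow>h. a * (lin n u \<theta> + k) ^ (s + 1))"
      unfolding g_def h_def by (simp add: split_def o_def)
  qed
  moreover have "length g + length h \<le> (\<Prod>i<n. b i + 1)"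
    using len_split[of L] unfolding g_def h_def g0_def h0_def L_def by (simp add: length_fulllist)
  ultimately show ?thesis by blast
qed

theorem theorem3p2:
  fixes n :: nat and b :: "nat \<Rightarrow> nat"
  assumes "n \<ge> 1"
    and "\<And>i. i < n \<Longrightarrow> 1 \<le> b i"
    and "\<And>i j. i \<le> j \<Longrightarrow> j < n \<Longrightarrow> b i \<le> b j"
  defines "s \<equiv> (\<Sum>i<n. b i)"
  shows "(even s \<longrightarrow>
            has_DC_even n s (monomial n b) \<and>
            (\<Prod>i\<in>{1..<n}. b i + 1) \<le> min_atoms_even n s (monomial n b) \<and>
            min_atoms_even n s (monomial n b) \<le> (\<Prod>i<n. b i + 1) div 2)
       \<and> (odd s \<longrightarrow>
            has_DC_odd n s (monomial n b) \<and>
            min_atoms_odd n s (monomial n b) = (\<Prod>i<n. b i + 1))"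
proof (intro conjI impI)
  have n: "1 \<le> n" using assms(1) .
  have b0: "1 \<le> b 0" using assms(2)[of 0] n by simp
  have sdef: "s = (\<Sum>i<n. b i)" unfolding s_def ..
  {
    assume ev: "even s"
    obtain g h where gh: "is_DC_even n s (monomial n b) g h" "length g + length h \<le> (\<Prod>i<n. b i + 1) div 2"
      using upper_even[OF n b0 sdef ev] by blast
    show "has_DC_even n s (monomial n b)" unfolding has_DC_even_def using gh by blast
    define P where "P = (\<lambda>k. \<exists>g h. is_DC_even n s (monomial n b) g h \<and> length g + length h = k)"
    have Pgh: "P (length g + length h)" unfolding P_def using gh by blast
    have "min_atoms_even n s (monomial n b) = (LEAST k. P k)" unfolding min_atoms_even_def P_def ..
    then have eqN: "min_atoms_even n s (monomial n b) = (LEAST k. P k)" .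
    show "min_atoms_even n s (monomial n b) \<le> (\<Prod>i<n. b i + 1) div 2"
      unfolding eqN using Least_le[of P, OF Pgh] gh(2) by linarith
    have "P (LEAST k. P k)" using Pgh by (rule LeastI)
    then obtain g' h' where "is_DC_even n s (monomial n b) g' h'" "length g' + length h' = (LEAST k. P k)"
      unfolding P_def by blast
    then show "(\<Prod>i\<in>{1..<n}. b i + 1) \<le> min_atoms_even n s (monomial n b)"
      unfolding eqN using lower_even[OF n b0 sdef] by metis
  }
  {
    assume od: "odd s"
    obtain g h where gh: "is_DC_odd n s (monomial n b) g h" "length g + length h \<le> (\<Prod>i<n. b i + 1)"
      using upper_odd[OF sdef] by blast
    show "has_DC_odd n s (monomial n b)" unfolding has_DC_odd_def using gh by blast
    define P where "P = (\<lambda>k. \<exists>g h. is_DC_odd n s (monomial n b) g h \<and> length g + length h = k)"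
    have Pgh: "P (length g + length h)" unfolding P_def using gh by blast
    have eqN: "min_atoms_odd n s (monomial n b) = (LEAST k. P k)" unfolding min_atoms_odd_def P_def ..
    have le: "(LEAST k. P k) \<le> (\<Prod>i<n. b i + 1)" using Least_le[of P, OF Pgh] gh(2) by linarith
    have "P (LEAST k. P k)" using Pgh by (rule LeastI)
    then obtain g' h' where gh': "is_DC_odd n s (monomial n b) g' h'" "length g' + length h' = (LEAST k. P k)"
      unfolding P_def by blast
    have ge: "(\<Prod>i<n. b i + 1) \<le> (LEAST k. P k)" using lower_odd[OF n sdef gh'(1)] gh'(2) by simp
    show "min_atoms_odd n s (monomial n b) = (\<Prod>i<n. b i + 1)" unfolding eqN using le ge by simp
  }
qed

end
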